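(* Let $K\ge2$, $\theta>1$, $T>0$, and let $\xi_1,\dots,\xi_K$ be $C^1$ real functions on $[T,\infty)$ satisfying, for all $t\ge T$, $$\dot\xi_1=-t^{-1}\gamma_1\big(e^{-(\xi_2-\xi_1)}-1\big)+O(t^{-\theta}),$$ $$\dot\xi_k=t^{-1}\Big(\gamma_{k-1}\big(e^{-(\xi_k-\xi_{k-1})}-1\big)-\gamma_k\big(e^{-(\xi_{k+1}-\xi_k)}-1\big)\Big)+O(t^{-\theta}),\quad 2\le k\le K-1,$$ $$\dot\xi_K=t^{-1}\gamma_{K-1}\big(e^{-(\xi_K-\xi_{K-1})}-1\big)+O(t^{-\theta}),$$ where $\gamma_k=\frac{k(K-k)}{2}$ and each $O(t^{-\theta})$ is bounded in absolute value by $Ct^{-\theta}$ for a fixed $C$. Assume moreover that $\sup_{t\ge T}|\sum_{k=1}^K\xi_k(t)|<\infty$. Then there exists $M>0$ with $|\xi_k(t)|\le M$ for all $k=1,\dots,K$ and all $t\ge T$. *)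

theory Defs
  imports "HOL-Analysis.Analysis"
begin

definition gam :: "nat \<Rightarrow> nat \<Rightarrow> real" where
  "gam K k = real k * (real K - real k) / 2"

end

theory Submission
  imports Defs
begin

lemma sbp: fixes b y :: "nat \<Rightarrow> real" assumes "b 0 = 0"
  shows "(\<Sum>k=1..<Suc n. b k * (y (Suc k) - y k)) = (\<Sum>k=1..Suc n. y k * (b (k-1) - b k)) + b (Suc n) * y (Suc n)"
proof (induction n)
  case 0 then show ?case using assms by simp
next
  case (Suc n)
  have "(\<Sum>k=1..<Suc (Suc n). b k * (y (Suc k) - y k)) = (\<Sum>k=1..<Suc n. b k * (y (Suc k) - y k)) + b (Suc n) * (y (Suc (Suc n)) - y (Suc n))"
    by simp
  also have "\<dots> = (\<Sum>k=1..Suc n. y k * (b (k-1) - b k)) + b (Suc n) * y (Suc (Suc n))" using Suc by (simp add: algebra_simps)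
  also have "\<dots> = (\<Sum>k=1..Suc (Suc n). y k * (b (k-1) - b k)) + b (Suc (Suc n)) * y (Suc (Suc n))"
    by (simp add: algebra_simps)
  finally show ?case .
qed

lemma mono_within:
  fixes H H' :: "real \<Rightarrow> real"
  assumes d: "\<And>x. x \<ge> T \<Longrightarrow> (H has_real_derivative H' x) (at x within {T..})"
    and n: "\<And>x. x \<ge> T \<Longrightarrow> H' x \<le> 0" and t: "t \<ge> T"
  shows "H t \<le> H T"
proof (rule DERIV_nonpos_imp_decreasing_open[OF t])
  fix x assume x: "T < x" "x < t"
  have "at x within {T..} = at x"
    by (rule at_within_interior) (use x in simp)
  then show "\<exists>y. (H has_real_derivative y) (at x) \<and> y \<le> 0"
    using d[of x] n[of x] x by auto
next
  have "continuous_on {T..} H"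
    unfolding continuous_on_eq_continuous_within
    using d DERIV_continuous by (metis atLeast_iff)
  then show "continuous_on {T..t} H" by (rule continuous_on_subset) auto
qed

lemma absle: "\<bar>x::real\<bar> \<le> exp (-x) + x"
proof (cases "x \<ge> 0")
  case True then show ?thesis using exp_gt_zero[of "-x"] by simp
next
  case False
  have e: "exp (-x) = (exp (-x/2))^2" by (simp flip: exp_of_nat_mult)
  have a: "exp (-x/2) \<ge> 1 + (-x/2)" by (rule exp_ge_add_one_self)
  have b: "1 + (-x/2) \<ge> 0" using False by simp
  have "(1 + (-x/2))^2 \<le> (exp (-x/2))^2" using power_mono[OF a b] .
  then have c: "exp (-x) \<ge> (1 + (-x/2))^2" using e by simp
  have "(1 + (-x/2))^2 - (-2*x) = (1 + x/2)^2" by (simp add: power2_eq_square algebra_simps)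
  moreover have "(1 + x/2)^2 \<ge> 0" by simp
  ultimately have "(1 + (-x/2))^2 \<ge> -2*x" by linarith
  then show ?thesis using False c by simp
qed

lemma termb: fixes t xp d c :: real assumes "t > 0" "\<bar>xp - d\<bar> \<le> c"
  shows "- (xp * (t * d)) \<le> t * c^2 / 4"
proof -
  have "(xp-d)^2/4 - (-(xp*d)) = (xp+d)^2/4" by (simp add: power2_eq_square field_simps)
  moreover have "(xp+d)^2/4 \<ge> 0" by simp
  ultimately have 1: "-(xp*d) \<le> (xp-d)^2/4" by linarith
  have "\<bar>xp-d\<bar> \<le> \<bar>c\<bar>" using assms(2) by linarith
  then have "(xp-d)^2 \<le> c^2" by (simp add: abs_le_square_iff)
  with 1 have "-(xp*d) \<le> c^2/4" by simp
  then have "t * (-(xp*d)) \<le> t * (c^2/4)" using assms(1) by (intro mult_left_mono) auto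
  then show ?thesis by (simp add: algebra_simps)
qed

lemma pw: "(t::real) > 0 \<Longrightarrow> t powr (1 - 2*th) = t * (t powr (-th))^2"
proof -
  assume t: "t > 0"
  have "t powr (1 - 2*th) = t powr 1 * t powr (-th) * t powr (-th)"
    by (simp only: powr_add[symmetric]) (simp add: algebra_simps)
  then show ?thesis using t by (simp add: power2_eq_square)
qed

lemma dtest: fixes xi xi' :: "nat \<Rightarrow> real \<Rightarrow> real"
  assumes d1: "(xi (Suc k) has_real_derivative xi' (Suc k) t) (at t within {T..})"
  and d2: "(xi k has_real_derivative xi' k t) (at t within {T..})"
  shows "((\<lambda>s. g * (exp (-(xi (Suc k) s - xi k s)) + (xi (Suc k) s - xi k s))) has_real_derivative
      g * ((1 - exp(-(xi (Suc k) t - xi k t))) * (xi' (Suc k) t - xi' k t))) (at t within {T..})"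
proof -
  have a: "((\<lambda>s. xi (Suc k) s - xi k s) has_real_derivative (xi' (Suc k) t - xi' k t)) (at t within {T..})"
    by (rule DERIV_diff[OF d1 d2])
  have b: "((\<lambda>s. exp (-(xi (Suc k) s - xi k s))) has_real_derivative exp (-(xi (Suc k) t - xi k t)) * (- (xi' (Suc k) t - xi' k t))) (at t within {T..})"
    by (rule DERIV_chain2[OF DERIV_exp DERIV_minus[OF a]])
  have "((\<lambda>s. g * (exp (-(xi (Suc k) s - xi k s)) + (xi (Suc k) s - xi k s))) has_real_derivative
      g * (exp (-(xi (Suc k) t - xi k t)) * (- (xi' (Suc k) t - xi' k t)) + (xi' (Suc k) t - xi' k t))) (at t within {T..})"
    by (rule DERIV_cmult[OF DERIV_add[OF b a]])
  then show ?thesis by (simp add: algebra_simps)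
qed

lemma dtest2: assumes dF: "(F has_real_derivative F') (at t within {T..})" and t: "t > 0" and th: "th > 1"
  shows "((\<lambda>s. F s + D * s powr (2-2*th)/(2*th-2)) has_real_derivative F' - D * t powr (1-2*th)) (at t within {T..})"
proof -
  have p: "((\<lambda>s. s powr (2-2*th)) has_real_derivative (2-2*th) * t powr (2-2*th-1)) (at t within {T..})"
    by (rule has_field_derivative_at_within[OF has_real_derivative_powr[OF t]])
  have "((\<lambda>s. F s + D * s powr (2-2*th)/(2*th-2)) has_real_derivative F' + D * ((2-2*th) * t powr (2-2*th-1))/(2*th-2)) (at t within {T..})"
    by (rule DERIV_add[OF dF DERIV_cdivide[OF DERIV_cmult[OF p]]])
  moreover have "D * ((2-2*th) * t powr (2-2*th-1))/(2*th-2) = - D * t powr (1-2*th)"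
    using th by (simp add: field_simps)
  ultimately show ?thesis by simp
qed

theorem mainTheorem13:
  fixes K :: nat and \<theta> T C :: real
    and \<xi> \<xi>' :: "nat \<Rightarrow> real \<Rightarrow> real"
  assumes K2: "K \<ge> 2" and th: "\<theta> > 1" and Tpos: "T > 0"
    and deriv: "\<And>k t. 1 \<le> k \<Longrightarrow> k \<le> K \<Longrightarrow> t \<ge> T \<Longrightarrow>
                  (\<xi> k has_real_derivative \<xi>' k t) (at t within {T..})"
    and contderiv: "\<And>k. 1 \<le> k \<Longrightarrow> k \<le> K \<Longrightarrow> continuous_on {T..} (\<xi>' k)"
    and eq1: "\<And>t. t \<ge> T \<Longrightarrow>
       \<bar>\<xi>' 1 t - (- (1/t) * gam K 1 * (exp (- (\<xi> 2 t - \<xi> 1 t)) - 1))\<bar> \<le> C * t powr (-\<theta>)"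
    and eqk: "\<And>k t. 2 \<le> k \<Longrightarrow> k \<le> K - 1 \<Longrightarrow> t \<ge> T \<Longrightarrow>
       \<bar>\<xi>' k t - (1/t) * (gam K (k-1) * (exp (- (\<xi> k t - \<xi> (k-1) t)) - 1)
                        - gam K k * (exp (- (\<xi> (k+1) t - \<xi> k t)) - 1))\<bar> \<le> C * t powr (-\<theta>)"
    and eqK: "\<And>t. t \<ge> T \<Longrightarrow>
       \<bar>\<xi>' K t - (1/t) * gam K (K-1) * (exp (- (\<xi> K t - \<xi> (K-1) t)) - 1)\<bar> \<le> C * t powr (-\<theta>)"
    and sumbdd: "bdd_above ((\<lambda>t. \<bar>\<Sum>k=1..K. \<xi> k t\<bar>) ` {T..})"
  shows "\<exists>M>0. \<forall>k\<in>{1..K}. \<forall>t\<ge>T. \<bar>\<xi> k t\<bar> \<le> M"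
proof -
  define x where "x k t = \<xi> (Suc k) t - \<xi> k t" for k t
  define b where "b k t = gam K k * (exp (- x k t) - 1)" for k t
  have gam0: "gam K 0 = 0" and gamK: "gam K K = 0" by (simp_all add: gam_def)
  have b0: "b 0 t = 0" and bK: "b K t = 0" for t by (simp_all add: b_def gam0 gamK)
  have eqall: "\<bar>\<xi>' k t - (b (k-1) t - b k t)/t\<bar> \<le> C * t powr (-\<theta>)"
    if k: "1 \<le> k" "k \<le> K" and t: "t \<ge> T" for k t
  proof -
    have t0: "t \<noteq> 0" using t Tpos by simp
    consider "k = 1" | "k = K" | "2 \<le> k \<and> k \<le> K-1" using k K2 by linarith
    then show ?thesis
    proof cases
      case 1
      have "(b (k-1) t - b k t)/t = - (1/t) * gam K 1 * (exp (- (\<xi> 2 t - \<xi> 1 t)) - 1)"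
        using 1 by (simp add: b_def x_def gam0 numeral_2_eq_2)
      then show ?thesis using eq1[OF t] 1 t0 by simp
    next
      case 2
      have sk: "Suc (K - Suc 0) = K" using K2 by simp
      have "(b (k-1) t - b k t)/t = (1/t) * gam K (K-1) * (exp (- (\<xi> K t - \<xi> (K-1) t)) - 1)"
        using 2 by (simp add: b_def x_def gamK sk)
      then show ?thesis using eqK[OF t] 2 t0 by simp
    next
      case 3
      have sk: "Suc (k - Suc 0) = k" using 3 by simp
      have "(b (k-1) t - b k t)/t = (1/t) * (gam K (k-1) * (exp (- (\<xi> k t - \<xi> (k-1) t)) - 1)
                        - gam K k * (exp (- (\<xi> (k+1) t - \<xi> k t)) - 1))"
        by (simp add: b_def x_def sk)
      then show ?thesis using eqk[OF _ _ t, of k] 3 t0 by simp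
    qed
  qed
  define F where "F t = (\<Sum>k\<in>{1..<K}. gam K k * (exp (- x k t) + x k t))" for t
  define F' where "F' t = (\<Sum>k\<in>{1..<K}. gam K k * ((1 - exp (- x k t)) * (\<xi>' (Suc k) t - \<xi>' k t)))" for t
  have dF: "(F has_real_derivative F' t) (at t within {T..})" if t: "t \<ge> T" for t
    unfolding F_def F'_def x_def
  proof (rule DERIV_sum)
    fix k assume "k \<in> {1..<K}"
    then show "((\<lambda>s. gam K k * (exp (- (\<xi> (Suc k) s - \<xi> k s)) + (\<xi> (Suc k) s - \<xi> k s))) has_real_derivative
      gam K k * ((1 - exp (- (\<xi> (Suc k) t - \<xi> k t))) * (\<xi>' (Suc k) t - \<xi>' k t))) (at t within {T..})"
      by (intro dtest deriv t) auto
  qed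
  define D where "D = real K * C^2 / 4"
  have F'le: "F' t \<le> D * t powr (1 - 2*\<theta>)" if t: "t \<ge> T" for t
  proof -
    have tp: "t > 0" using t Tpos by simp
    have "F' t = - (\<Sum>k=1..<Suc (K-1). b k t * (\<xi>' (Suc k) t - \<xi>' k t))"
      using K2 by (simp add: F'_def b_def algebra_simps flip: sum_negf)
    also have "\<dots> = - (\<Sum>k=1..Suc (K-1). \<xi>' k t * (b (k-1) t - b k t))"
      using sbp[where b="\<lambda>k. b k t" and n="K-1" and y="\<lambda>k. \<xi>' k t"] b0 bK K2 by simp
    also have "\<dots> = (\<Sum>k=1..K. - (\<xi>' k t * (t * ((b (k-1) t - b k t)/t))))"
      using K2 tp by (simp add: sum_negf)
    also have "\<dots> \<le> (\<Sum>k=1..K. t * (C * t powr (-\<theta>))^2 / 4)"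
      by (rule sum_mono, rule termb[OF tp eqall]) (use t in auto)
    also have "\<dots> = D * (t * (t powr (-\<theta>))^2)"
      by (simp add: D_def power_mult_distrib)
    also have "\<dots> = D * t powr (1 - 2*\<theta>)" using pw[OF tp] by simp
    finally show ?thesis .
  qed
  define H where "H t = F t + D * t powr (2-2*\<theta>)/(2*\<theta>-2)" for t
  have Hmono: "H t \<le> H T" if t: "t \<ge> T" for t
  proof (rule mono_within[OF _ _ t])
    fix s assume s: "s \<ge> T"
    show "(H has_real_derivative F' s - D * s powr (1-2*\<theta>)) (at s within {T..})"
      unfolding H_def[abs_def] by (rule dtest2[OF dF[OF s]]) (use s Tpos th in auto)
    show "F' s - D * s powr (1-2*\<theta>) \<le> 0" using F'le[OF s] by simp
  qed
  define B where "B = H T"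
  have FB: "F t \<le> B" if t: "t \<ge> T" for t
  proof -
    have "D \<ge> 0" by (simp add: D_def)
    then have "D * t powr (2-2*\<theta>)/(2*\<theta>-2) \<ge> 0" using th by simp
    then show ?thesis using Hmono[OF t] by (simp add: B_def H_def)
  qed
  define X where "X = 2 * B"
  have gap: "\<bar>\<xi> (Suc k) t - \<xi> k t\<bar> \<le> X" if k: "1 \<le> k" "k < K" and t: "t \<ge> T" for k t
  proof -
    have nn: "\<And>j. j \<in> {1..<K} \<Longrightarrow> 0 \<le> gam K j * (exp (- x j t) + x j t)"
      using absle by (intro mult_nonneg_nonneg) (auto simp: gam_def intro: order_trans[OF abs_ge_zero])
    have "gam K k * (exp (- x k t) + x k t) \<le> F t"
      unfolding F_def by (rule member_le_sum) (use k nn in auto)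
    then have 1: "gam K k * (exp (- x k t) + x k t) \<le> B" using FB[OF t] by simp
    have "1 \<le> k * (K - k)" using k by (simp add: Suc_le_eq)
    then have "(1::real) \<le> real k * (real K - real k)" using k
      by (metis of_nat_1 of_nat_diff of_nat_le_iff of_nat_mult less_imp_le)
    then have g: "gam K k \<ge> 1/2" by (simp add: gam_def)
    have a: "\<bar>x k t\<bar> \<le> exp (- x k t) + x k t" by (rule absle)
    have "(1/2) * (exp (- x k t) + x k t) \<le> gam K k * (exp (- x k t) + x k t)"
      using g a by (intro mult_right_mono) (auto intro: order_trans[OF abs_ge_zero])
    then show ?thesis using 1 a by (simp add: X_def x_def)
  qed
  have X0: "X \<ge> 0"
  proof -
    have "\<bar>\<xi> (Suc 1) T - \<xi> 1 T\<bar> \<le> X" using gap[of 1 T] K2 by simp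
    then show ?thesis by linarith
  qed
  have chain: "Suc j \<le> K \<Longrightarrow> \<bar>\<xi> (Suc j) t - \<xi> 1 t\<bar> \<le> real j * X" if t: "t \<ge> T" for j t
  proof (induction j)
    case 0 then show ?case by simp
  next
    case (Suc j)
    have "\<bar>\<xi> (Suc (Suc j)) t - \<xi> (Suc j) t\<bar> \<le> X" using gap[OF _ _ t, of "Suc j"] Suc.prems by simp
    then show ?case using Suc by (simp add: algebra_simps)
  qed
  have pair: "\<bar>\<xi> k t - \<xi> j t\<bar> \<le> 2 * real K * X"
    if k: "k \<in> {1..K}" and j: "j \<in> {1..K}" and t: "t \<ge> T" for k j t
  proof -
    obtain k' where k': "k = Suc k'" using k by (cases k) auto
    obtain j' where j': "j = Suc j'" using j by (cases j) auto
    have 1: "\<bar>\<xi> k t - \<xi> 1 t\<bar> \<le> real k' * X" using chain[OF t, of k'] k k' by simp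
    have 2: "\<bar>\<xi> j t - \<xi> 1 t\<bar> \<le> real j' * X" using chain[OF t, of j'] j j' by simp
    have "real k' * X \<le> real K * X" using k k' X0 by (intro mult_right_mono) auto
    moreover have "real j' * X \<le> real K * X" using j j' X0 by (intro mult_right_mono) auto
    ultimately show ?thesis using 1 2 by linarith
  qed
  obtain Sb where Sb: "\<And>t. t \<ge> T \<Longrightarrow> \<bar>\<Sum>k=1..K. \<xi> k t\<bar> \<le> Sb"
    using sumbdd unfolding bdd_above_def by auto
  define M where "M = \<bar>(Sb + real K * (2 * real K * X)) / real K\<bar> + 1"
  show ?thesis
  proof (intro exI[of _ M] conjI ballI allI impI)
    have "\<bar>(Sb + real K * (2 * real K * X)) / real K\<bar> \<ge> 0" by (rule abs_ge_zero)
    then show "M > 0" unfolding M_def by linarith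
    fix k t assume k: "k \<in> {1..K}" and t: "t \<ge> T"
    have Kp: "real K > 0" using K2 by simp
    have e: "real K * \<xi> k t = (\<Sum>j=1..K. \<xi> j t) + (\<Sum>j=1..K. (\<xi> k t - \<xi> j t))"
      by (simp add: sum_subtractf)
    have "\<bar>\<Sum>j=1..K. (\<xi> k t - \<xi> j t)\<bar> \<le> (\<Sum>j=1..K. \<bar>\<xi> k t - \<xi> j t\<bar>)" by (rule sum_abs)
    also have "\<dots> \<le> (\<Sum>j=1..K. 2 * real K * X)" by (rule sum_mono) (use pair k t in auto)
    also have "\<dots> = real K * (2 * real K * X)" by simp
    finally have "\<bar>real K * \<xi> k t\<bar> \<le> Sb + real K * (2 * real K * X)"
      using e Sb[OF t] by linarith
    then have "real K * \<bar>\<xi> k t\<bar> \<le> Sb + real K * (2 * real K * X)" using Kp by (simp add: abs_mult)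
    then have "\<bar>\<xi> k t\<bar> \<le> (Sb + real K * (2 * real K * X)) / real K" using Kp by (simp add: field_simps)
    then show "\<bar>\<xi> k t\<bar> \<le> M" unfolding M_def by linarith
  qed
qed

end
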